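(* Let $n,m,p,N\in\mathbb{N}_+$, $B\in\mathbb{R}^{n\times m}$, $C\in\mathbb{R}^{p\times n}$ of full column rank, $x_0\in\mathbb{R}^n$, $r_1,\dots,r_N\in\mathbb{R}^p$, $r_0:=Cx_0$, and $\mathcal{S}_{\rm M1}\subseteq\mathbb{R}^{n\times n}\times\mathbb{R}^{m\times N}$. Let $v^*_{\rm A1}$ be the optimal value (infimum) of problem (AMOPUL1): minimize $\sum_{t=1}^N\|CAC^{\dagger}r_{t-1}+CBu_{t-1}-r_t\|_2$ over $(A,U)\in\mathcal{S}_{\rm M1}$, $U=(u_0,\dots,u_{N-1})$. Let $\epsilon_1,\dots,\epsilon_N\ge0$ and $$\mathcal{Z}_\epsilon:=\{(A,U)\in\mathcal{S}_{\rm M1}:\ \hat y_0=Cx_0,\ \hat y_t=CAC^{\dagger}\hat y_{t-1}+CBu_{t-1},\ \|\hat y_t-r_t\|_2\le\epsilon_t,\ t=1,\dots,N\}.$$ If $\mathcal{Z}_\epsilon\ne\emptyset$, then $$v^*_{\rm A1}\le(1+\gamma)\sum_{t=1}^{N-1}\epsilon_t+\epsilon_N,\qquad \gamma:=\inf_{(A,U)\in\mathcal{Z}_\epsilon}\|CAC^{\dagger}\|_2.$$ Moreover, if there exists $(A,U)\in\mathcal{S}_{\rm M1}$ such that the sequence defined by $\hat y_0=Cx_0$, $\hat y_t=CAC^{\dagger}\hat y_{t-1}+CBu_{t-1}$ satisfies $\hat y_t=r_t$ for $t=1,\dots,N$, then $v^*_{\rm A1}=0$.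
   Context: $C^{\dagger}$ is the Moore–Penrose inverse of $C$; $\|\cdot\|_2$ is the Euclidean norm for vectors and the spectral norm for matrices. In the paper $\mathcal{S}_{\rm M1}$ is assumed SD representable, though this is not used in the claim. *)

theory Defs
  imports "HOL-Analysis.Analysis"
begin

definition is_mp_inverse :: "real^'n^'p \<Rightarrow> real^'p^'n \<Rightarrow> bool" where
  "is_mp_inverse C X \<longleftrightarrow>
     C ** X ** C = C \<and> X ** C ** X = X \<and>
     transpose (C ** X) = C ** X \<and> transpose (X ** C) = X ** C"

definition mp_inverse :: "real^'n^'p \<Rightarrow> real^'p^'n" where
  "mp_inverse C = (THE X. is_mp_inverse C X)"

definition spec_norm :: "real^'n^'m \<Rightarrow> real" where
  "spec_norm M = onorm (\<lambda>x. M *v x)"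

fun yhat :: "real^'n^'p \<Rightarrow> real^'m^'n \<Rightarrow> real^'n \<Rightarrow> real^'n^'n \<Rightarrow> (nat \<Rightarrow> real^'m) \<Rightarrow> nat \<Rightarrow> real^'p" where
  "yhat C B x0 A U 0 = C *v x0"
| "yhat C B x0 A U (Suc t) =
     (C ** A ** mp_inverse C) *v yhat C B x0 A U t + (C ** B) *v U t"

definition amopul1_obj :: "real^'n^'p \<Rightarrow> real^'m^'n \<Rightarrow> (nat \<Rightarrow> real^'p) \<Rightarrow> nat \<Rightarrow> real^'n^'n \<Rightarrow> (nat \<Rightarrow> real^'m) \<Rightarrow> real" where
  "amopul1_obj C B r N A U =
     (\<Sum>t=1..N. norm ((C ** A ** mp_inverse C) *v r (t - 1) + (C ** B) *v U (t - 1) - r t))"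

end

theory Submission
  imports Defs
begin

lemma spec_norm_bound: "norm (M *v x) \<le> spec_norm M * norm (x::real^'n)"
  for M :: "real^'n^'m"
  unfolding spec_norm_def using onorm[OF matrix_vector_mul_bounded_linear] by blast

lemma spec_norm_nonneg: "0 \<le> spec_norm (M :: real^'n^'m)"
  unfolding spec_norm_def using onorm_pos_le[OF matrix_vector_mul_bounded_linear] by blast

lemma obj_nonneg: "0 \<le> amopul1_obj C B r N A U"
  unfolding amopul1_obj_def by (simp add: sum_nonneg)

lemma obj_bound:
  fixes B :: "real^'m^'n" and C :: "real^'n^'p" and x0 :: "real^'n"
  assumes "N \<ge> 1" "r 0 = C *v x0"
    and le: "\<forall>t\<in>{1..N}. norm (yhat C B x0 A U t - r t) \<le> eps t"
  shows "amopul1_obj C B r N A U \<le> (1 + spec_norm (C ** A ** mp_inverse C)) * (\<Sum>t=1..N-1. eps t) + eps N"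
proof -
  let ?M = "C ** A ** mp_inverse C"
  let ?s = "spec_norm ?M"
  define d where "d t = (if t = 0 then 0 else eps t)" for t
  have hterm: "norm (?M *v r (t - 1) + (C ** B) *v U (t - 1) - r t) \<le> eps t + ?s * d (t - 1)"
    if t: "t \<in> {1..N}" for t
  proof -
    obtain k where k: "t = Suc k" using t by (cases t) auto
    have eq: "?M *v r (t - 1) + (C ** B) *v U (t - 1) - r t
       = (yhat C B x0 A U t - r t) + ?M *v (r k - yhat C B x0 A U k)"
      by (simp add: k matrix_vector_right_distrib algebra_simps)
    have a: "norm (yhat C B x0 A U t - r t) \<le> eps t" using le t by blast
    have b: "norm (?M *v (r k - yhat C B x0 A U k)) \<le> ?s * d k"
    proof (cases k)
      case 0 then show ?thesis using assms(2) by (simp add: d_def)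
    next
      case (Suc j)
      have "k \<in> {1..N}" using t k Suc by auto
      then have "norm (yhat C B x0 A U k - r k) \<le> eps k" using le by blast
      then have "norm (r k - yhat C B x0 A U k) \<le> eps k" by (simp add: norm_minus_commute)
      then have "?s * norm (r k - yhat C B x0 A U k) \<le> ?s * eps k"
        by (simp add: mult_left_mono spec_norm_nonneg)
      then show ?thesis using spec_norm_bound[of ?M "r k - yhat C B x0 A U k"] Suc
        by (simp add: d_def)
    qed
    have tri: "norm ((yhat C B x0 A U t - r t) + ?M *v (r k - yhat C B x0 A U k))
       \<le> norm (yhat C B x0 A U t - r t) + norm (?M *v (r k - yhat C B x0 A U k))"
      by (rule norm_triangle_ineq)
    have "norm ((yhat C B x0 A U t - r t) + ?M *v (r k - yhat C B x0 A U k)) \<le> eps t + ?s * d k"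
      by (rule order_trans[OF tri add_mono[OF a b]])
    then show ?thesis unfolding eq using k by simp
  qed
  have "amopul1_obj C B r N A U \<le> (\<Sum>t=1..N. eps t + ?s * d (t - 1))"
    unfolding amopul1_obj_def by (rule sum_mono) (use hterm in blast)
  also have "\<dots> = (\<Sum>t=1..N. eps t) + ?s * (\<Sum>t=1..N. d (t - 1))"
    by (simp add: sum.distrib sum_distrib_left)
  also have "(\<Sum>t=1..N. d (t - 1)) = (\<Sum>t=1..N-1. eps t)"
  proof -
    obtain n where n: "N = Suc n" using assms(1) by (cases N) auto
    have "(\<Sum>t=1..N. d (t - 1)) = (\<Sum>t=0..n. d t)"
      unfolding n One_nat_def sum.shift_bounds_cl_Suc_ivl by simp
    also have "\<dots> = d 0 + (\<Sum>t=1..n. d t)" by (simp add: sum.atLeast_Suc_atMost)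
    also have "\<dots> = (\<Sum>t=1..n. eps t)" by (simp add: d_def)
    finally show ?thesis by (simp add: n)
  qed
  also have "(\<Sum>t=1..N. eps t) = (\<Sum>t=1..N-1. eps t) + eps N"
  proof -
    obtain n where n: "N = Suc n" using assms(1) by (cases N) auto
    show ?thesis by (simp add: n)
  qed
  finally show ?thesis by (simp add: algebra_simps)
qed

theorem theorem4:
  fixes B :: "real^'m^'n" and C :: "real^'n^'p" and x0 :: "real^'n"
    and r :: "nat \<Rightarrow> real^'p" and N :: nat
    and S :: "((real^'n^'n) \<times> (nat \<Rightarrow> real^'m)) set"
    and eps :: "nat \<Rightarrow> real"
  assumes "N \<ge> 1"
    and "rank C = CARD('n)"
    and "r 0 = C *v x0"
    and "\<forall>t\<in>{1..N}. eps t \<ge> 0"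
  defines "v \<equiv> Inf ((\<lambda>(A, U). amopul1_obj C B r N A U) ` S)"
    and "Z \<equiv> {(A, U) \<in> S. \<forall>t\<in>{1..N}. norm (yhat C B x0 A U t - r t) \<le> eps t}"
  shows "(Z \<noteq> {} \<longrightarrow>
           v \<le> (1 + Inf ((\<lambda>(A, U). spec_norm (C ** A ** mp_inverse C)) ` Z)) * (\<Sum>t=1..N-1. eps t) + eps N)
       \<and> ((\<exists>(A, U)\<in>S. \<forall>t\<in>{1..N}. yhat C B x0 A U t = r t) \<longrightarrow> v = 0)"
proof (intro conjI impI)
  have bdd: "bdd_below ((\<lambda>(A, U). amopul1_obj C B r N A U) ` S)"
    by (rule bdd_belowI[of _ 0]) (auto simp: obj_nonneg)
  have vle: "v \<le> amopul1_obj C B r N A U" if "(A, U) \<in> S" for A U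
    unfolding v_def by (rule cInf_lower[OF _ bdd]) (use that in force)
  {
    assume Zne: "Z \<noteq> {}"
    define E where "E = (\<Sum>t=1..N-1. eps t)"
    have E0: "E \<ge> 0" unfolding E_def using assms(4) by (intro sum_nonneg) auto
    have key: "v \<le> (1 + spec_norm (C ** A ** mp_inverse C)) * E + eps N" if "(A, U) \<in> Z" for A U
    proof -
      have "(A, U) \<in> S" "\<forall>t\<in>{1..N}. norm (yhat C B x0 A U t - r t) \<le> eps t"
        using that by (auto simp: Z_def)
      then show ?thesis using vle[of A U] obj_bound[of N r C x0 B A U eps, OF assms(1) assms(3)] unfolding E_def
        by (meson order_trans)
    qed
    let ?I = "Inf ((\<lambda>(A, U). spec_norm (C ** A ** mp_inverse C)) ` Z)"
    show "v \<le> (1 + ?I) * (\<Sum>t=1..N-1. eps t) + eps N"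
    proof (cases "E = 0")
      case True
      obtain A U where "(A, U) \<in> Z" using Zne by auto
      then show ?thesis using key[of A U] True unfolding E_def by simp
    next
      case False
      then have Ep: "E > 0" using E0 by simp
      have "(v - eps N) / E - 1 \<le> ?I"
      proof (rule cInf_greatest)
        show "(\<lambda>(A, U). spec_norm (C ** A ** mp_inverse C)) ` Z \<noteq> {}" using Zne by simp
        fix x assume "x \<in> (\<lambda>(A, U). spec_norm (C ** A ** mp_inverse C)) ` Z"
        then obtain A U where AU: "(A, U) \<in> Z" "x = spec_norm (C ** A ** mp_inverse C)" by auto
        have "v - eps N \<le> (1 + x) * E" using key[OF AU(1)] AU(2) by simp
        then have "(v - eps N) / E \<le> 1 + x" using Ep by (simp add: divide_le_eq mult.commute)
        then show "(v - eps N) / E - 1 \<le> x" by simp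
      qed
      then have "(v - eps N) / E \<le> 1 + ?I" by simp
      then have "v - eps N \<le> (1 + ?I) * E" using Ep by (simp add: divide_le_eq)
      then show ?thesis unfolding E_def by simp
    qed
  }
  assume "\<exists>(A, U)\<in>S. \<forall>t\<in>{1..N}. yhat C B x0 A U t = r t"
  then obtain A U where AU: "(A, U) \<in> S" "\<forall>t\<in>{1..N}. yhat C B x0 A U t = r t" by auto
  have "amopul1_obj C B r N A U = 0"
    unfolding amopul1_obj_def
  proof (rule sum.neutral, intro ballI)
    fix t assume t: "t \<in> {1..N}"
    obtain k where k: "t = Suc k" using t by (cases t) auto
    have "yhat C B x0 A U k = r k"
    proof (cases k)
      case 0 then show ?thesis using assms(3) by simp
    next
      case (Suc j)
      then have "k \<in> {1..N}" using t k by auto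
      then show ?thesis using AU(2) by blast
    qed
    moreover have "yhat C B x0 A U t = r t" using AU(2) t by blast
    ultimately show "norm ((C ** A ** mp_inverse C) *v r (t - 1) + (C ** B) *v U (t - 1) - r t) = 0"
      using k by simp
  qed
  then show "v = 0" unfolding v_def
    by (intro cInf_eq_minimum) (use AU(1) in \<open>force, auto simp: obj_nonneg\<close>)
qed

end
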